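(* Let $H$ be a complex Hilbert space, $\varphi,\psi:[0,1]\to\mathbb{R}$ continuous, $A\in\mathbb{B}(H)$ and $t\in[0,1]$. Then $$\frac14\big(\min\{|\varphi(t)+\psi(t)|,|\varphi(t)-\psi(t)|\}\big)^2\|A^*A+AA^*\|\le\omega_t^2(\varphi,\psi;A)\le\frac12\big(\max\{|\varphi(t)+\psi(t)|,|\varphi(t)-\psi(t)|\}\big)^2\|A^*A+AA^*\|.$$
   Context: $S_1(H)$ is the unit sphere of $H$ and $\omega_t(\varphi,\psi;A)=\sup_{x\in S_1(H)}|\langle(\varphi(t)A+\psi(t)A^* )x,x\rangle|$. *)

theory Defs
  imports "HOL-Analysis.Analysis"
begin

text \<open>A complex Hilbert space is modelled as an abelian group 'h together with a
complex scalar multiplication sc and a complex inner product ip (linear in the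
first argument, conjugate-linear in the second), complete w.r.t. the induced norm.\<close>

definition cnorm :: "('h \<Rightarrow> 'h \<Rightarrow> complex) \<Rightarrow> 'h \<Rightarrow> real" where
  "cnorm ip x = sqrt (Re (ip x x))"

definition complex_hilbert_space ::
  "(complex \<Rightarrow> 'h::ab_group_add \<Rightarrow> 'h) \<Rightarrow> ('h \<Rightarrow> 'h \<Rightarrow> complex) \<Rightarrow> bool" where
  "complex_hilbert_space sc ip \<longleftrightarrow>
     (\<forall>a x y. sc a (x + y) = sc a x + sc a y) \<and>
     (\<forall>a b x. sc (a + b) x = sc a x + sc b x) \<and>
     (\<forall>a b x. sc a (sc b x) = sc (a * b) x) \<and>
     (\<forall>x. sc 1 x = x) \<and>
     (\<forall>x y z. ip (x + y) z = ip x z + ip y z) \<and>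
     (\<forall>a x y. ip (sc a x) y = a * ip x y) \<and>
     (\<forall>x y. ip y x = cnj (ip x y)) \<and>
     (\<forall>x. 0 \<le> Re (ip x x)) \<and>
     (\<forall>x. ip x x = 0 \<longrightarrow> x = 0) \<and>
     (\<forall>X :: nat \<Rightarrow> 'h. (\<forall>e>0. \<exists>N. \<forall>m\<ge>N. \<forall>n\<ge>N. cnorm ip (X m - X n) < e)
        \<longrightarrow> (\<exists>L. (\<lambda>n. cnorm ip (X n - L)) \<longlonglongrightarrow> 0))"

definition bounded_op ::
  "(complex \<Rightarrow> 'h::ab_group_add \<Rightarrow> 'h) \<Rightarrow> ('h \<Rightarrow> 'h \<Rightarrow> complex) \<Rightarrow> ('h \<Rightarrow> 'h) \<Rightarrow> bool" where
  "bounded_op sc ip A \<longleftrightarrow>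
     (\<forall>x y. A (x + y) = A x + A y) \<and> (\<forall>c x. A (sc c x) = sc c (A x)) \<and>
     (\<exists>K. \<forall>x. cnorm ip (A x) \<le> K * cnorm ip x)"

definition adjoint :: "('h \<Rightarrow> 'h \<Rightarrow> complex) \<Rightarrow> ('h \<Rightarrow> 'h) \<Rightarrow> ('h \<Rightarrow> 'h)" where
  "adjoint ip A = (THE B. \<forall>x y. ip (A x) y = ip x (B y))"

definition op_norm :: "('h \<Rightarrow> 'h \<Rightarrow> complex) \<Rightarrow> ('h \<Rightarrow> 'h) \<Rightarrow> real" where
  "op_norm ip T = Sup {cnorm ip (T x) | x. cnorm ip x \<le> 1}"

text \<open>The value 0 is inserted only so that the supremum is well defined for H = {0};
  for H nontrivial it does not change the supremum (all values are nonnegative).\<close>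
definition omega_t ::
  "(complex \<Rightarrow> 'h::ab_group_add \<Rightarrow> 'h) \<Rightarrow> ('h \<Rightarrow> 'h \<Rightarrow> complex) \<Rightarrow> (real \<Rightarrow> real) \<Rightarrow> (real \<Rightarrow> real)
    \<Rightarrow> ('h \<Rightarrow> 'h) \<Rightarrow> real \<Rightarrow> real" where
  "omega_t sc ip \<phi> \<psi> A t = Sup (insert 0
     {cmod (ip (sc (complex_of_real (\<phi> t)) (A x) + sc (complex_of_real (\<psi> t)) (adjoint ip A x)) x)
      | x. cnorm ip x = 1})"

end

theory Submission
  imports Defs
begin


locale chs =
  fixes sc :: "complex \<Rightarrow> 'h::ab_group_add \<Rightarrow> 'h" and ip :: "'h \<Rightarrow> 'h \<Rightarrow> complex"
  assumes H: "complex_hilbert_space sc ip"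
begin

lemmas HD = H[unfolded complex_hilbert_space_def]

lemma sc_add_r: "sc a (x + y) = sc a x + sc a y" by (rule HD[THEN conjunct1, rule_format])
lemma sc_add_l: "sc (a + b) x = sc a x + sc b x" by (rule HD[THEN conjunct2, THEN conjunct1, rule_format])
lemma sc_assoc: "sc a (sc b x) = sc (a * b) x" by (rule HD[THEN conjunct2, THEN conjunct2, THEN conjunct1, rule_format])
lemma sc_one: "sc 1 x = x" by (rule HD[THEN conjunct2, THEN conjunct2, THEN conjunct2, THEN conjunct1, rule_format])
lemma ip_add_l: "ip (x + y) z = ip x z + ip y z" by (rule HD[THEN conjunct2, THEN conjunct2, THEN conjunct2, THEN conjunct2, THEN conjunct1, rule_format])
lemma ip_sc_l: "ip (sc a x) y = a * ip x y" by (rule HD[THEN conjunct2, THEN conjunct2, THEN conjunct2, THEN conjunct2, THEN conjunct2, THEN conjunct1, rule_format])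
lemma ip_cnj: "ip y x = cnj (ip x y)" by (rule HD[THEN conjunct2, THEN conjunct2, THEN conjunct2, THEN conjunct2, THEN conjunct2, THEN conjunct2, THEN conjunct1, rule_format])
lemma ip_pos: "0 \<le> Re (ip x x)" by (rule HD[THEN conjunct2, THEN conjunct2, THEN conjunct2, THEN conjunct2, THEN conjunct2, THEN conjunct2, THEN conjunct2, THEN conjunct1, rule_format])
lemma ip_def0: "ip x x = 0 \<Longrightarrow> x = 0" by (rule HD[THEN conjunct2, THEN conjunct2, THEN conjunct2, THEN conjunct2, THEN conjunct2, THEN conjunct2, THEN conjunct2, THEN conjunct2, THEN conjunct1, rule_format])
lemma complete: "(\<forall>e>0. \<exists>N. \<forall>m\<ge>N. \<forall>n\<ge>N. cnorm ip (X m - X n) < e)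
        \<Longrightarrow> (\<exists>L. (\<lambda>n. cnorm ip (X n - L)) \<longlonglongrightarrow> 0)"
  using HD[THEN conjunct2, THEN conjunct2, THEN conjunct2, THEN conjunct2, THEN conjunct2,
    THEN conjunct2, THEN conjunct2, THEN conjunct2, THEN conjunct2] by blast

lemma sc_zero[simp]: "sc 0 x = 0"
  using sc_add_l[of 0 0 x] by simp
lemma sc_zero_r[simp]: "sc a 0 = 0"
  using sc_add_r[of a 0 0] by simp
lemma sc_minus1: "sc (-1) x = - x"
  using sc_add_l[of 1 "-1" x] sc_one[of x] by (simp add: eq_neg_iff_add_eq_0 add.commute)
lemma sc_neg_r: "sc a (- x) = - sc a x"
  using sc_add_r[of a x "-x"] by (simp add: eq_neg_iff_add_eq_0 add.commute)
lemma sc_diff_r: "sc a (x - y) = sc a x - sc a y"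
  using sc_add_r[of a x "-y"] sc_neg_r by simp

lemma ip_zero_l[simp]: "ip 0 y = 0"
  using ip_add_l[of 0 0 y] by simp
lemma ip_neg_l: "ip (- x) y = - ip x y"
  using ip_add_l[of x "-x" y] by (simp add: eq_neg_iff_add_eq_0 add.commute)
lemma ip_diff_l: "ip (x - y) z = ip x z - ip y z"
  using ip_add_l[of x "-y" z] ip_neg_l by simp
lemma ip_add_r: "ip x (y + z) = ip x y + ip x z"
  by (metis ip_cnj ip_add_l complex_cnj_add)
lemma ip_sc_r: "ip x (sc a y) = cnj a * ip x y"
  by (metis ip_cnj ip_sc_l complex_cnj_mult)
lemma ip_zero_r[simp]: "ip x 0 = 0"
  by (metis ip_cnj ip_zero_l complex_cnj_zero)
lemma ip_neg_r: "ip x (- y) = - ip x y"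
  by (metis ip_cnj ip_neg_l complex_cnj_minus)
lemma ip_diff_r: "ip x (y - z) = ip x y - ip x z"
  by (metis ip_cnj ip_diff_l complex_cnj_diff)

lemma ip_self_Im: "Im (ip x x) = 0"
  using arg_cong[OF ip_cnj[of x x], of Im] by simp
lemma ip_self_real: "ip x x = complex_of_real (Re (ip x x))"
  using ip_self_Im[of x] by (simp add: complex_eq_iff)

abbreviation nrm where "nrm x \<equiv> cnorm ip x"

lemma nrm_nonneg: "0 \<le> nrm x" unfolding cnorm_def using ip_pos[of x] by simp
lemma nrm_sq: "(nrm x)^2 = Re (ip x x)" unfolding cnorm_def using ip_pos by simp
lemma nrm_zero[simp]: "nrm 0 = 0" unfolding cnorm_def by simp
lemma nrm_eq0: "nrm x = 0 \<longleftrightarrow> x = 0"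
proof -
  have "nrm x = 0 \<longleftrightarrow> Re (ip x x) = 0" unfolding cnorm_def using ip_pos[of x] by simp
  also have "\<dots> \<longleftrightarrow> ip x x = 0"
  proof
    assume "Re (ip x x) = 0" then show "ip x x = 0" using ip_self_real[of x] by simp
  next
    assume "ip x x = 0" then show "Re (ip x x) = 0" by simp
  qed
  also have "\<dots> \<longleftrightarrow> x = 0" using ip_def0 by auto
  finally show ?thesis .
qed

lemma ip_sc_sc: "ip (sc a x) (sc b y) = a * cnj b * ip x y"
  by (simp add: ip_sc_l ip_sc_r)

lemma nrm_sc: "nrm (sc a x) = cmod a * nrm x"
proof -
  have "Re (ip (sc a x) (sc a x)) = (cmod a)^2 * Re (ip x x)"
    by (subst ip_self_real) (simp add: ip_sc_sc complex_mult_cnj cmod_power2 del: of_real_power)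
  hence "(nrm (sc a x))^2 = (cmod a * nrm x)^2" by (simp add: nrm_sq power_mult_distrib)
  thus ?thesis using nrm_nonneg by (metis mult_nonneg_nonneg norm_ge_zero power2_eq_imp_eq)
qed

lemma nrm_neg: "nrm (- x) = nrm x"
  using nrm_sc[of "-1" x] sc_minus1 by simp
lemma nrm_commute: "nrm (x - y) = nrm (y - x)"
  by (metis minus_diff_eq nrm_neg)

end

context chs begin

lemma ip_add_add: "ip (x + y) (u + v) = ip x u + ip x v + ip y u + ip y v"
  by (simp add: ip_add_l ip_add_r)
lemma ip_diff_diff: "ip (x - y) (u - v) = ip x u - ip x v - ip y u + ip y v"
  by (simp add: ip_diff_l ip_diff_r)

lemma cs_sq: "(cmod (ip x y))^2 \<le> Re (ip x x) * Re (ip y y)"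
proof (cases "y = 0")
  case True thus ?thesis by simp
next
  case False
  define r where "r = Re (ip y y)"
  have r0: "r > 0" using False nrm_eq0[of y] nrm_sq[of y] nrm_nonneg[of y] unfolding r_def
    by (metis less_eq_real_def zero_less_power2)
  define c where "c = ip x y"
  define t where "t = c / complex_of_real r"
  have yy: "ip y y = complex_of_real r" unfolding r_def using ip_self_real .
  have yx: "ip y x = cnj c" unfolding c_def using ip_cnj .
  have "ip (x - sc t y) (x - sc t y) = ip x x - cnj t * c - t * cnj c + t * cnj t * complex_of_real r"
    by (simp add: ip_diff_diff ip_sc_l ip_sc_r yy yx c_def)
  also have "\<dots> = ip x x - complex_of_real ((cmod c)^2 / r)"
  proof -
    have cc: "complex_of_real (cmod c) * complex_of_real (cmod c) = c * cnj c"
      using complex_norm_square[of c] by (simp add: power2_eq_square)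
    show ?thesis using r0 unfolding t_def
      by (simp add: field_simps power2_eq_square cc)
  qed
  finally have "0 \<le> Re (ip x x) - (cmod c)^2 / r"
    using ip_pos[of "x - sc t y"] by simp
  hence "(cmod c)^2 / r \<le> Re (ip x x)" by simp
  thus ?thesis using r0 unfolding c_def r_def by (simp add: field_simps)
qed

lemma cs: "cmod (ip x y) \<le> nrm x * nrm y"
proof -
  have "(cmod (ip x y))^2 \<le> (nrm x * nrm y)^2"
    using cs_sq[of x y] by (simp add: power_mult_distrib nrm_sq)
  thus ?thesis using nrm_nonneg by (meson mult_nonneg_nonneg power2_le_imp_le)
qed

lemma Re_ip_sym: "Re (ip y x) = Re (ip x y)"
  using ip_cnj[of x y] by simp

lemma nsq_add: "Re (ip (x + y) (x + y)) = Re (ip x x) + 2 * Re (ip x y) + Re (ip y y)"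
  using Re_ip_sym[of x y] by (simp add: ip_add_add)
lemma nsq_diff: "Re (ip (x - y) (x - y)) = Re (ip x x) - 2 * Re (ip x y) + Re (ip y y)"
  using Re_ip_sym[of x y] by (simp add: ip_diff_diff)

lemma parallelogram: "Re (ip (x + y) (x + y)) + Re (ip (x - y) (x - y)) = 2 * Re (ip x x) + 2 * Re (ip y y)"
  by (simp add: nsq_add nsq_diff)

lemma nrm_triangle: "nrm (x + y) \<le> nrm x + nrm y"
proof -
  have "Re (ip x y) \<le> nrm x * nrm y" using cs[of x y] complex_Re_le_cmod order_trans by blast
  moreover have "(nrm (x + y))^2 = (nrm x)^2 + 2 * Re (ip x y) + (nrm y)^2" by (simp add: nrm_sq nsq_add)
  ultimately have "(nrm (x + y))^2 \<le> (nrm x + nrm y)^2"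
    by (simp add: power2_sum)
  thus ?thesis using nrm_nonneg by (meson add_nonneg_nonneg power2_le_imp_le)
qed

lemma nrm_sq_sc_add: "Re (ip (x + sc (complex_of_real s) y) (x + sc (complex_of_real s) y))
   = Re (ip x x) + 2 * s * Re (ip y x) + s^2 * Re (ip y y)"
  apply (simp add: nsq_add ip_sc_l ip_sc_r power2_eq_square)
  using Re_ip_sym[of x y] ip_self_real[of y] by (metis Re_complex_of_real of_real_mult)

end


lemma var_lemma:
  fixes u c d :: real
  assumes d: "d \<ge> 0" and h: "\<And>s. 1 + s * u \<ge> 0 \<Longrightarrow> (1 + s * u)^2 \<le> 1 + 2 * s * c + s^2 * d"
  shows "u = c"
proof (rule ccontr)
  have key: "2 * s * (u - c) \<le> s^2 * d" if "1 + s * u \<ge> 0" for s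
  proof -
    have "(1 + s * u)^2 \<le> 1 + 2 * s * c + s^2 * d" using h that .
    hence "1 + 2 * s * u + s^2 * u^2 \<le> 1 + 2 * s * c + s^2 * d" by (simp add: power2_eq_square algebra_simps)
    hence "2 * s * u - 2 * s * c \<le> s^2 * d - s^2 * u^2" by linarith
    moreover have "s^2 * u^2 \<ge> 0" by simp
    ultimately have "2 * s * u - 2 * s * c \<le> s^2 * d" by linarith
    thus ?thesis by (simp add: algebra_simps)
  qed
  assume "u \<noteq> c"
  then consider "u > c" | "u < c" by linarith
  thus False
  proof cases
    case 1
    define s where "s = min (1/(\<bar>u\<bar>+1)) ((u-c)/(d+1))"
    have s0: "s > 0" unfolding s_def using 1 d by simp
    have s1: "s \<le> 1/(\<bar>u\<bar>+1)" unfolding s_def by simp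
    have "s \<le> (u - c)/(d+1)" unfolding s_def by simp
    hence s2: "s * (d+1) \<le> u - c" using pos_le_divide_eq[of "d+1"] d by simp
    have "s * (\<bar>u\<bar>+1) \<le> 1" using s1 pos_le_divide_eq[of "\<bar>u\<bar>+1"] by simp
    hence "s * \<bar>u\<bar> \<le> 1" using s0 by (simp add: algebra_simps)
    moreover have "\<bar>s * u\<bar> = s * \<bar>u\<bar>" using s0 by (simp add: abs_mult)
    ultimately have "1 + s * u \<ge> 0" by arith
    hence "2 * s * (u - c) \<le> s^2 * d" by (rule key)
    hence "2 * (u - c) \<le> s * d" using s0 by (simp add: power2_eq_square)
    thus False using s2 1 s0 by (smt (verit) distrib_left mult.commute mult_cancel_left1)
  next
    case 2
    define t where "t = min (1/(\<bar>u\<bar>+1)) ((c-u)/(d+1))"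
    have s0: "t > 0" unfolding t_def using 2 d by simp
    have s1: "t \<le> 1/(\<bar>u\<bar>+1)" unfolding t_def by simp
    have "t \<le> (c - u)/(d+1)" unfolding t_def by simp
    hence s2: "t * (d+1) \<le> c - u" using pos_le_divide_eq[of "d+1"] d by simp
    have "t * (\<bar>u\<bar>+1) \<le> 1" using s1 pos_le_divide_eq[of "\<bar>u\<bar>+1"] by simp
    hence "t * \<bar>u\<bar> \<le> 1" using s0 by (simp add: algebra_simps)
    moreover have "\<bar>(-t) * u\<bar> = t * \<bar>u\<bar>" using s0 by (simp add: abs_mult)
    ultimately have "1 + (-t) * u \<ge> 0" by arith
    hence "2 * (-t) * (u - c) \<le> (-t)^2 * d" by (rule key)
    hence "t * (2 * (c - u)) \<le> t * (t * d)" by (simp add: power2_eq_square algebra_simps)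
    hence "2 * (c - u) \<le> t * d" using s0 by (rule mult_left_le_imp_le)
    thus False using s2 2 s0 by (smt (verit) distrib_left mult.commute mult_cancel_left1)
  qed
qed

context chs begin

lemma riesz:
  assumes add: "\<And>x y. f (x + y) = f x + f y" and hom: "\<And>c x. f (sc c x) = c * f x"
    and bnd: "\<And>x. cmod (f x) \<le> K * nrm x"
  shows "\<exists>z. \<forall>x. f x = ip x z"
proof (cases "\<forall>x. f x = 0")
  case True thus ?thesis by (intro exI[of _ 0]) simp
next
  case False
  then obtain x0 where x0: "f x0 \<noteq> 0" by blast
  have f0: "f 0 = 0" using hom[of 0 0] by simp
  have fminus: "f (x - y) = f x - f y" for x y
    using add[of "x - y" y] by simp
  define R where "R = {Re (f x) | x. nrm x \<le> 1}"
  have bdd: "bdd_above R"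
  proof (rule bdd_aboveI[of _ "\<bar>K\<bar>"])
    fix r assume "r \<in> R"
    then obtain x where r: "r = Re (f x)" and x: "nrm x \<le> 1" unfolding R_def by blast
    have "r \<le> cmod (f x)" using r complex_Re_le_cmod by simp
    also have "\<dots> \<le> K * nrm x" by (rule bnd)
    also have "\<dots> \<le> \<bar>K\<bar> * nrm x" using nrm_nonneg[of x] by (simp add: mult_right_mono)
    also have "\<dots> \<le> \<bar>K\<bar>" using x nrm_nonneg[of x] by (simp add: mult_left_le)
    finally show "r \<le> \<bar>K\<bar>" .
  qed
  have R0: "0 \<in> R" unfolding R_def using f0 by (intro CollectI exI[of _ 0]) simp
  define F where "F = Sup R"
  have upper: "Re (f x) \<le> F" if "nrm x \<le> 1" for x
    unfolding F_def using bdd that by (intro cSup_upper) (auto simp: R_def)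
  have F0: "F \<ge> 0" unfolding F_def using bdd R0 cSup_upper by blast
  have scale: "Re (f v) \<le> F * nrm v" for v
  proof (cases "v = 0")
    case True thus ?thesis using f0 by simp
  next
    case False
    hence nv: "nrm v > 0" using nrm_eq0 nrm_nonneg by (metis less_eq_real_def)
    define u where "u = sc (complex_of_real (1 / nrm v)) v"
    have "nrm u = 1" unfolding u_def using nv by (simp add: nrm_sc norm_divide)
    hence "Re (f u) \<le> F" using upper by simp
    moreover have "Re (f u) = Re (f v) / nrm v" unfolding u_def hom by simp
    ultimately show ?thesis using nv by (simp add: field_simps)
  qed
  have Fpos: "F > 0"
  proof -
    define y0 where "y0 = sc (cnj (f x0)) x0"
    have "f y0 = complex_of_real ((cmod (f x0))^2)"
      unfolding y0_def hom by (metis complex_norm_square mult.commute)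
    hence "Re (f y0) > 0" using x0 by simp
    hence "0 < F * nrm y0" using scale[of y0] by linarith
    thus ?thesis using nrm_nonneg[of y0] F0 by (simp add: zero_less_mult_iff)
  qed
  define e :: "nat \<Rightarrow> real" where "e n = inverse (real (Suc n))" for n
  have e0: "e n > 0" for n unfolding e_def by simp
  have "\<exists>x. nrm x \<le> 1 \<and> F - e n < Re (f x)" for n
  proof -
    have "F - e n < Sup R" using e0[of n] unfolding F_def by simp
    then obtain r where "r \<in> R" "F - e n < r" using less_cSup_iff[of R] R0 bdd by blast
    thus ?thesis unfolding R_def by blast
  qed
  then obtain X where X1: "\<And>n. nrm (X n) \<le> 1" and X2: "\<And>n. F - e n < Re (f (X n))"
    by metis
  have est: "Re (ip (X m - X n) (X m - X n)) \<le> 4 * ((e m + e n) / F)" for m n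
  proof -
    define u where "u = X m"
    define v where "v = X n"
    define \<delta> where "\<delta> = (e m + e n) / F"
    have "Re (f (u + v)) > 2 * F - (e m + e n)" using X2[of m] X2[of n] unfolding u_def v_def add by simp
    moreover have "Re (f (u + v)) \<le> F * nrm (u + v)" by (rule scale)
    ultimately have h: "2 * F - (e m + e n) < F * nrm (u + v)" by linarith
    have "F * (2 - \<delta>) = 2 * F - (e m + e n)" unfolding \<delta>_def using Fpos by (simp add: field_simps)
    hence "F * (2 - \<delta>) < F * nrm (u + v)" using h by simp
    hence nuv: "2 - \<delta> < nrm (u + v)" using Fpos by simp
    have "(nrm u)^2 \<le> 1" using X1[of m] nrm_nonneg[of u] unfolding u_def
      by (simp add: power_le_one)
    moreover have "(nrm v)^2 \<le> 1" using X1[of n] nrm_nonneg[of v] unfolding v_def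
      by (simp add: power_le_one)
    ultimately have par: "Re (ip (u - v) (u - v)) \<le> 4 - (nrm (u + v))^2"
      using parallelogram[of u v] by (simp add: nrm_sq)
    have d0: "\<delta> \<ge> 0" unfolding \<delta>_def using e0[of m] e0[of n] Fpos by simp
    show ?thesis
    proof (cases "\<delta> \<le> 2")
      case True
      hence "(2 - \<delta>)^2 \<le> (nrm (u + v))^2" using nuv by (intro power_mono) auto
      moreover have "(2 - \<delta>)^2 = 4 - 4 * \<delta> + \<delta>^2" by (simp add: power2_eq_square algebra_simps)
      moreover have "\<delta>^2 \<ge> 0" by simp
      ultimately have "4 - 4 * \<delta> \<le> (nrm (u + v))^2" by linarith
      thus ?thesis using par unfolding u_def v_def \<delta>_def by simp
    next
      case False
      moreover have "(nrm (u + v))^2 \<ge> 0" by simp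
      ultimately show ?thesis using par unfolding u_def v_def \<delta>_def by linarith
    qed
  qed
  have cauchy: "\<forall>\<epsilon>>0. \<exists>N. \<forall>m\<ge>N. \<forall>n\<ge>N. nrm (X m - X n) < \<epsilon>"
  proof (intro allI impI)
    fix \<epsilon> :: real assume ep: "\<epsilon> > 0"
    obtain N :: nat where N: "real N > 8 / (F * \<epsilon>^2)" using reals_Archimedean2 by blast
    have N2: "8 / (F * real (Suc N)) < \<epsilon>^2"
    proof -
      have "8 < real N * (F * \<epsilon>^2)" using N ep Fpos by (simp add: field_simps)
      also have "\<dots> \<le> real (Suc N) * (F * \<epsilon>^2)" using ep Fpos by (intro mult_right_mono) auto
      finally have h8: "8 < real (Suc N) * (F * \<epsilon>^2)" .
      have pos: "F * real (Suc N) > 0" using Fpos by simp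
      have "real (Suc N) * (F * \<epsilon>^2) = \<epsilon>^2 * (F * real (Suc N))" by (simp add: ac_simps)
      thus ?thesis using h8 by (subst pos_divide_less_eq[OF pos]) linarith
    qed
    show "\<exists>N. \<forall>m\<ge>N. \<forall>n\<ge>N. nrm (X m - X n) < \<epsilon>"
    proof (intro exI allI impI)
      fix m n assume mn: "N \<le> m" "N \<le> n"
      have "e m \<le> inverse (real (Suc N))" "e n \<le> inverse (real (Suc N))"
        unfolding e_def using mn by (auto intro!: le_imp_inverse_le)
      hence "e m + e n \<le> 2 * inverse (real (Suc N))" by linarith
      hence "4 * ((e m + e n) / F) \<le> 4 * ((2 * inverse (real (Suc N))) / F)" using Fpos
        by (intro mult_left_mono divide_right_mono) auto
      also have "\<dots> = 8 / (F * real (Suc N))" by (simp add: field_simps)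
      finally have "4 * ((e m + e n) / F) \<le> 8 / (F * real (Suc N))" .
      hence "(nrm (X m - X n))^2 < \<epsilon>^2" using est[of m n] N2 by (simp add: nrm_sq)
      thus "nrm (X m - X n) < \<epsilon>" using ep nrm_nonneg by (meson less_le power_less_imp_less_base)
    qed
  qed
  then obtain L where lim: "(\<lambda>n. nrm (X n - L)) \<longlonglongrightarrow> 0" using complete by blast
  have eL: "e \<longlonglongrightarrow> 0" unfolding e_def by (rule LIMSEQ_inverse_real_of_nat)
  have nL1: "nrm L \<le> 1"
  proof -
    have "(\<lambda>n. 1 + nrm (X n - L)) \<longlonglongrightarrow> 1 + 0" by (intro tendsto_intros lim)
    moreover have "nrm L \<le> 1 + nrm (X n - L)" for n
    proof -
      have "nrm L = nrm (X n + (L - X n))" by simp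
      also have "\<dots> \<le> nrm (X n) + nrm (L - X n)" by (rule nrm_triangle)
      finally show ?thesis using X1[of n] nrm_commute[of L "X n"] by simp
    qed
    ultimately show ?thesis by (intro LIMSEQ_le_const) auto
  qed
  have fL: "F \<le> Re (f L)"
  proof -
    have "(\<lambda>n. F - e n - K * nrm (X n - L)) \<longlonglongrightarrow> F - 0 - K * 0" by (intro tendsto_intros lim eL)
    moreover have "F - e n - K * nrm (X n - L) \<le> Re (f L)" for n
    proof -
      have "f L = f (X n) + f (L - X n)" using add[of "X n" "L - X n"] by simp
      moreover have "- Re (f (L - X n)) \<le> K * nrm (X n - L)"
      proof -
        have "cmod (f (L - X n)) \<le> K * nrm (X n - L)" using bnd[of "L - X n"] nrm_commute[of L "X n"] by simp
        thus ?thesis using abs_Re_le_cmod[of "f (L - X n)"] by linarith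
      qed
      ultimately show ?thesis using X2[of n] by simp
    qed
    ultimately show ?thesis by (intro LIMSEQ_le_const2) auto
  qed
  have nL: "Re (ip L L) = 1"
  proof -
    have "F \<le> F * nrm L" using fL scale[of L] by linarith
    hence "nrm L \<ge> 1" using Fpos by simp
    hence "nrm L = 1" using nL1 by simp
    thus ?thesis using nrm_sq[of L] by simp
  qed
  have ReF: "Re (f y) = F * Re (ip y L)" for y
  proof -
    have "Re (f y) / F = Re (ip y L)"
    proof (rule var_lemma[where d = "Re (ip y y)"])
      show "0 \<le> Re (ip y y)" by (rule ip_pos)
      fix s :: real assume s: "0 \<le> 1 + s * (Re (f y) / F)"
      have "Re (f (L + sc (complex_of_real s) y)) = F * (1 + s * (Re (f y) / F))"
        using fL scale[of L] nL1 Fpos unfolding add hom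
        by (simp add: field_simps) (smt (verit) mult_left_le)
      hence "F * (1 + s * (Re (f y) / F)) \<le> F * nrm (L + sc (complex_of_real s) y)"
        using scale by metis
      hence "1 + s * (Re (f y) / F) \<le> nrm (L + sc (complex_of_real s) y)" using Fpos by simp
      hence "(1 + s * (Re (f y) / F))^2 \<le> (nrm (L + sc (complex_of_real s) y))^2"
        using s by (intro power_mono) auto
      also have "\<dots> = 1 + 2 * s * Re (ip y L) + s^2 * Re (ip y y)"
        by (simp add: nrm_sq nrm_sq_sc_add nL)
      finally show "(1 + s * (Re (f y) / F))^2 \<le> 1 + 2 * s * Re (ip y L) + s^2 * Re (ip y y)" .
    qed
    thus ?thesis using Fpos by (simp add: field_simps)
  qed
  have ImF: "Im (f y) = F * Im (ip y L)" for y
    using ReF[of "sc \<i> y"] unfolding hom by (simp add: ip_sc_l)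
  show ?thesis
  proof (intro exI allI)
    fix y
    show "f y = ip y (sc (complex_of_real F) L)"
      using ReF[of y] ImF[of y] by (simp add: ip_sc_r complex_eq_iff)
  qed
qed

lemma adjoint_prop:
  assumes "bounded_op sc ip A"
  shows "ip (A x) y = ip x (adjoint ip A y)"
proof -
  obtain K where K: "\<And>x. nrm (A x) \<le> K * nrm x" and addA: "\<And>x y. A (x + y) = A x + A y"
    and homA: "\<And>c x. A (sc c x) = sc c (A x)"
    using assms unfolding bounded_op_def by blast
  have "\<exists>z. \<forall>x. ip (A x) y = ip x z" for y
  proof (rule riesz[where K = "K * nrm y"])
    show "ip (A (x + x')) y = ip (A x) y + ip (A x') y" for x x' by (simp add: addA ip_add_l)
    show "ip (A (sc c x)) y = c * ip (A x) y" for c x by (simp add: homA ip_sc_l)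
    show "cmod (ip (A x) y) \<le> K * nrm y * nrm x" for x
    proof -
      have "cmod (ip (A x) y) \<le> nrm (A x) * nrm y" by (rule cs)
      also have "\<dots> \<le> K * nrm x * nrm y" using K nrm_nonneg by (intro mult_right_mono)
      finally show ?thesis by (simp add: ac_simps)
    qed
  qed
  then obtain B where B: "\<And>x y. ip (A x) y = ip x (B y)" by metis
  have "adjoint ip A = B"
    unfolding adjoint_def
  proof (rule the_equality)
    show "\<forall>x y. ip (A x) y = ip x (B y)" using B by blast
    fix B' assume B': "\<forall>x y. ip (A x) y = ip x (B' y)"
    show "B' = B"
    proof
      fix y
      have "ip (B' y - B y) (B' y - B y) = 0"
        using B'[rule_format, of "B' y - B y" y] B[of "B' y - B y" y] by (simp add: ip_diff_r)
      thus "B' y = B y" using ip_def0 by (metis eq_iff_diff_eq_0)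
    qed
  qed
  thus ?thesis using B by simp
qed

end


lemma two_abs: "2 * \<bar>a + b\<bar> = \<bar>2 * a + 2 * b\<bar>" for a b :: real by (simp only: distrib_left[symmetric] abs_mult)

lemma mix_bounds:
  fixes a b p q :: real
  shows "(min \<bar>a+b\<bar> \<bar>a-b\<bar>)^2 * (p^2 + q^2) \<le> (a+b)^2 * p^2 + (a-b)^2 * q^2"
    and "(a+b)^2 * p^2 + (a-b)^2 * q^2 \<le> (max \<bar>a+b\<bar> \<bar>a-b\<bar>)^2 * (p^2 + q^2)"
proof -
  define m where "m = min \<bar>a+b\<bar> \<bar>a-b\<bar>"
  define M where "M = max \<bar>a+b\<bar> \<bar>a-b\<bar>"
  have m1: "m^2 \<le> (a+b)^2" unfolding m_def
    by (metis abs_ge_zero min.cobounded1 min_def power2_abs power_mono)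
  have m2: "m^2 \<le> (a-b)^2" unfolding m_def
    by (metis abs_ge_zero min.cobounded2 min_def power2_abs power_mono)
  have M1: "(a+b)^2 \<le> M^2" unfolding M_def
    by (metis abs_ge_zero max.cobounded1 power2_abs power_mono)
  have M2: "(a-b)^2 \<le> M^2" unfolding M_def
    by (metis abs_ge_zero max.cobounded2 power2_abs power_mono)
  have p: "p^2 \<ge> 0" and q: "q^2 \<ge> 0" by simp_all
  show "(min \<bar>a+b\<bar> \<bar>a-b\<bar>)^2 * (p^2 + q^2) \<le> (a+b)^2 * p^2 + (a-b)^2 * q^2"
    using mult_right_mono[OF m1 p] mult_right_mono[OF m2 q] unfolding m_def[symmetric]
    by (simp add: distrib_left)
  show "(a+b)^2 * p^2 + (a-b)^2 * q^2 \<le> (max \<bar>a+b\<bar> \<bar>a-b\<bar>)^2 * (p^2 + q^2)"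
    using mult_right_mono[OF M1 p] mult_right_mono[OF M2 q] unfolding M_def[symmetric]
    by (simp add: distrib_left)
qed

context chs begin

lemma main:
  assumes bo: "bounded_op sc ip A"
  shows "(1/4) * (min \<bar>a + b\<bar> \<bar>a - b\<bar>)\<^sup>2
           * op_norm ip (\<lambda>x. adjoint ip A (A x) + A (adjoint ip A x))
         \<le> (Sup (insert 0 {cmod (ip (sc (complex_of_real a) (A x) + sc (complex_of_real b) (adjoint ip A x)) x)
              | x. cnorm ip x = 1}))\<^sup>2
       \<and> (Sup (insert 0 {cmod (ip (sc (complex_of_real a) (A x) + sc (complex_of_real b) (adjoint ip A x)) x)
              | x. cnorm ip x = 1}))\<^sup>2
         \<le> (1/2) * (max \<bar>a + b\<bar> \<bar>a - b\<bar>)\<^sup>2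
           * op_norm ip (\<lambda>x. adjoint ip A (A x) + A (adjoint ip A x))"
proof -
  define As where "As = adjoint ip A"
  define S where "S = (\<lambda>x. As (A x) + A (As x))"
  define T where "T = (\<lambda>x. sc (complex_of_real a) (A x) + sc (complex_of_real b) (As x))"
  define m where "m = min \<bar>a + b\<bar> \<bar>a - b\<bar>"
  define M where "M = max \<bar>a + b\<bar> \<bar>a - b\<bar>"
  obtain K where K: "\<And>x. nrm (A x) \<le> K * nrm x" and addA: "\<And>x y. A (x + y) = A x + A y"
    and homA: "\<And>c x. A (sc c x) = sc c (A x)"
    using bo unfolding bounded_op_def by blast
  have adj: "ip (A x) y = ip x (As y)" for x y unfolding As_def using adjoint_prop[OF bo] .
  have adjL: "ip (As x) y = cnj (ip (A y) x)" for x y using adj ip_cnj by metis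
  have A0: "A 0 = 0" using addA[of 0 0] by simp
  have Aneg: "A (- x) = - A x" for x using addA[of x "-x"] A0 by (simp add: eq_neg_iff_add_eq_0 add.commute)
  have Adiff: "A (x - y) = A x - A y" for x y using addA[of x "-y"] Aneg by simp
  have As0: "As 0 = 0"
    using adj[of "As 0" 0] ip_def0[of "As 0"] by simp
  have Kx: "nrm (A x) \<le> \<bar>K\<bar> * nrm x" for x
    using K[of x] nrm_nonneg[of x] by (smt (verit) mult_right_mono)
  define W where "W = {cmod (ip (A x) x) | x. nrm x = 1}"
  define \<omega> where "\<omega> = Sup (insert 0 W)"
  have bddW: "bdd_above (insert 0 W)"
  proof (rule bdd_aboveI[of _ "\<bar>K\<bar>"])
    fix r assume "r \<in> insert 0 W"
    then consider "r = 0" | x where "r = cmod (ip (A x) x)" "nrm x = 1" unfolding W_def by blast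
    thus "r \<le> \<bar>K\<bar>"
    proof cases
      case 2
      have "cmod (ip (A x) x) \<le> nrm (A x) * nrm x" by (rule cs)
      also have "\<dots> \<le> \<bar>K\<bar>" using Kx[of x] 2 by simp
      finally show ?thesis using 2 by simp
    qed simp
  qed
  have w0: "\<omega> \<ge> 0" unfolding \<omega>_def using bddW by (intro cSup_upper) auto
  have wunit: "cmod (ip (A x) x) \<le> \<omega>" if "nrm x = 1" for x
    unfolding \<omega>_def using bddW that by (intro cSup_upper) (auto simp: W_def)
  have W1: "cmod (ip (A x) x) \<le> \<omega> * (nrm x)^2" for x
  proof (cases "x = 0")
    case True thus ?thesis using A0 by simp
  next
    case False
    hence nx: "nrm x > 0" using nrm_eq0 nrm_nonneg by (metis less_eq_real_def)
    define u where "u = sc (complex_of_real (1 / nrm x)) x"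
    have "nrm u = 1" unfolding u_def using nx by (simp add: nrm_sc norm_divide)
    hence "cmod (ip (A u) u) \<le> \<omega>" by (rule wunit)
    moreover have "ip (A u) u = complex_of_real (1 / (nrm x)^2) * ip (A x) x"
      unfolding u_def homA ip_sc_sc by (simp add: power2_eq_square)
    ultimately have "cmod (ip (A x) x) / (nrm x)^2 \<le> \<omega>" using nx using nrm_nonneg[of x] by (simp add: norm_mult norm_divide norm_power)
    thus ?thesis using nx by (simp add: field_simps)
  qed
  have polar: "ip (A (x + y)) (x + y) - ip (A (x - y)) (x - y) = 2 * (ip (A x) y + ip (A y) x)" for x y
    by (simp add: addA Adiff ip_add_add ip_diff_diff)
  have polar_bound: "cmod (ip (A (x + y)) (x + y) - ip (A (x - y)) (x - y)) \<le> 2 * \<omega> * (Re (ip x x) + Re (ip y y))" for x y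
  proof -
    have "cmod (ip (A (x + y)) (x + y) - ip (A (x - y)) (x - y)) \<le> cmod (ip (A (x + y)) (x + y)) + cmod (ip (A (x - y)) (x - y))"
      by (rule norm_triangle_ineq4)
    also have "\<dots> \<le> \<omega> * (nrm (x + y))^2 + \<omega> * (nrm (x - y))^2" using W1 by (intro add_mono)
    also have "\<dots> = \<omega> * (Re (ip (x + y) (x + y)) + Re (ip (x - y) (x - y)))"
      by (simp add: nrm_sq distrib_left)
    also have "\<dots> = 2 * \<omega> * (Re (ip x x) + Re (ip y y))"
      unfolding parallelogram by (simp add: algebra_simps)
    finally show ?thesis .
  qed
  have ReP: "Re (ip (A x + As x) y) \<le> \<omega> * (Re (ip x x) + Re (ip y y))" for x y
  proof -
    have "2 * Re (ip (A x + As x) y) = Re (ip (A (x + y)) (x + y) - ip (A (x - y)) (x - y))"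
      unfolding polar by (simp add: ip_add_l adjL)
    also have "\<dots> \<le> 2 * \<omega> * (Re (ip x x) + Re (ip y y))"
      using polar_bound[of x y] complex_Re_le_cmod order_trans by blast
    finally show ?thesis by simp
  qed
  have ImQ: "\<bar>Im (ip (A x - As x) y)\<bar> \<le> \<omega> * (Re (ip x x) + Re (ip y y))" for x y
  proof -
    have "2 * \<bar>Im (ip (A x - As x) y)\<bar> = \<bar>Im (ip (A (x + y)) (x + y) - ip (A (x - y)) (x - y))\<bar>"
      unfolding polar by (simp add: ip_diff_l adjL two_abs)
    also have "\<dots> \<le> 2 * \<omega> * (Re (ip x x) + Re (ip y y))"
      using polar_bound[of x y] abs_Im_le_cmod order_trans by blast
    finally show ?thesis by simp
  qed
  have pick: "nrm v \<le> 2 * \<omega> * nrm x"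
    if x0: "x \<noteq> 0" and v0: "v \<noteq> 0" and h: "r * Re (ip v v) \<le> \<omega> * (Re (ip x x) + r^2 * Re (ip v v))"
      and r: "r = nrm x / nrm v" for x v r
  proof -
    have nx: "nrm x > 0" using x0 nrm_eq0 nrm_nonneg by (metis less_eq_real_def)
    have nv: "nrm v > 0" using v0 nrm_eq0 nrm_nonneg by (metis less_eq_real_def)
    have e1: "r * Re (ip v v) = nrm x * nrm v" unfolding r nrm_sq[symmetric] using nv
      by (simp add: power2_eq_square)
    have e2: "r^2 * Re (ip v v) = (nrm x)^2" unfolding r nrm_sq[symmetric] using nv
      by (simp add: power2_eq_square)
    from h have "nrm x * nrm v \<le> \<omega> * (Re (ip x x) + (nrm x)^2)" by (simp only: e1 e2)
    hence "nrm x * nrm v \<le> \<omega> * (2 * (nrm x)^2)" by (simp add: nrm_sq)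
    hence "nrm x * nrm v \<le> nrm x * (2 * \<omega> * nrm x)" by (simp add: power2_eq_square algebra_simps)
    thus ?thesis using nx by simp
  qed
  have Pb: "nrm (A x + As x) \<le> 2 * \<omega> * nrm x" for x
  proof (cases "x = 0")
    case True thus ?thesis using A0 As0 by simp
  next
    case x0: False
    show ?thesis
    proof (cases "A x + As x = 0")
      case True thus ?thesis using w0 nrm_nonneg[of x] by simp
    next
      case v0: False
      define v where "v = A x + As x"
      define r where "r = nrm x / nrm v"
      have "Re (ip v (sc (complex_of_real r) v)) \<le> \<omega> * (Re (ip x x) + Re (ip (sc (complex_of_real r) v) (sc (complex_of_real r) v)))"
        using ReP unfolding v_def by blast
      hence "r * Re (ip v v) \<le> \<omega> * (Re (ip x x) + r^2 * Re (ip v v))"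
        by (simp add: ip_sc_r ip_sc_l power2_eq_square mult.assoc)
      thus ?thesis using pick[OF x0 _ _ r_def] v0 unfolding v_def by blast
    qed
  qed
  have Qb: "nrm (A x - As x) \<le> 2 * \<omega> * nrm x" for x
  proof (cases "x = 0")
    case True thus ?thesis using A0 As0 by simp
  next
    case x0: False
    show ?thesis
    proof (cases "A x - As x = 0")
      case True thus ?thesis using w0 nrm_nonneg[of x] by simp
    next
      case v0: False
      define v where "v = A x - As x"
      define r where "r = nrm x / nrm v"
      have "\<bar>Im (ip v (sc (\<i> * complex_of_real r) v))\<bar> \<le> \<omega> * (Re (ip x x) + Re (ip (sc (\<i> * complex_of_real r) v) (sc (\<i> * complex_of_real r) v)))"
        using ImQ unfolding v_def by blast
      moreover have "r \<ge> 0" unfolding r_def using nrm_nonneg by simp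
      moreover have "Im (ip v (sc (\<i> * complex_of_real r) v)) = - r * Re (ip v v)"
        by (subst ip_sc_r, subst ip_self_real) simp
      moreover have "Re (ip (sc (\<i> * complex_of_real r) v) (sc (\<i> * complex_of_real r) v)) = r^2 * Re (ip v v)"
        by (subst ip_sc_sc, subst ip_self_real) (simp add: power2_eq_square)
      ultimately have "r * Re (ip v v) \<le> \<omega> * (Re (ip x x) + r^2 * Re (ip v v))"
        using ip_pos[of v] by (simp add: abs_mult)
      thus ?thesis using pick[OF x0 _ _ r_def] v0 unfolding v_def by blast
    qed
  qed
  have Sid: "2 * ip (S x) y = ip (A x + As x) (A y + As y) + ip (A x - As x) (A y - As y)" for x y
  proof -
    have "ip (S x) y = ip (A x) (A y) + ip (As x) (As y)"
      unfolding S_def ip_add_l adjL[of "A x"] adj[of "As x"] using ip_cnj[of "A x" "A y"] by simp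
    thus ?thesis by (simp add: ip_add_add ip_diff_diff)
  qed
  have Sb: "nrm (S x) \<le> 4 * \<omega>^2 * nrm x" for x
  proof -
    define y where "y = S x"
    have "2 * (nrm y)^2 = Re (2 * ip (S x) y)" unfolding y_def nrm_sq by simp
    also have "\<dots> \<le> cmod (ip (A x + As x) (A y + As y)) + cmod (ip (A x - As x) (A y - As y))"
      unfolding Sid by (metis complex_Re_le_cmod norm_triangle_ineq order_trans plus_complex.sel(1))
    also have "\<dots> \<le> nrm (A x + As x) * nrm (A y + As y) + nrm (A x - As x) * nrm (A y - As y)"
      by (intro add_mono cs)
    also have "\<dots> \<le> (2 * \<omega> * nrm x) * (2 * \<omega> * nrm y) + (2 * \<omega> * nrm x) * (2 * \<omega> * nrm y)"
      using Pb Qb nrm_nonneg w0 by (intro add_mono mult_mono) auto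
    finally have "2 * (nrm y)^2 \<le> 8 * \<omega>^2 * nrm x * nrm y" by (simp add: power2_eq_square algebra_simps)
    hence "nrm y * nrm y \<le> nrm y * (4 * \<omega>^2 * nrm x)" by (simp add: power2_eq_square algebra_simps)
    hence hy: "nrm y * nrm y \<le> nrm y * (4 * \<omega>^2 * nrm x)" .
    have "nrm y \<le> 4 * \<omega>^2 * nrm x"
    proof (cases "nrm y = 0")
      case True thus ?thesis using w0 nrm_nonneg[of x] by simp
    next
      case False hence "nrm y > 0" using nrm_nonneg[of y] by simp
      thus ?thesis using hy mult_le_cancel_left_pos by blast
    qed
    thus ?thesis unfolding y_def .
  qed
  define NS where "NS = {nrm (S x) | x. nrm x \<le> 1}"
  define N where "N = op_norm ip S"
  have NSne: "NS \<noteq> {}" unfolding NS_def by (auto intro!: exI[of _ 0])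
  have SB: "nrm (S x) \<le> 4 * \<omega>^2" if "nrm x \<le> 1" for x
    using Sb[of x] that w0 by (smt (verit) mult_left_le zero_le_power2 mult_nonneg_nonneg nrm_nonneg)
  have bddN: "bdd_above NS" unfolding NS_def using SB by (intro bdd_aboveI) blast
  have N_eq: "N = Sup NS" unfolding N_def op_norm_def NS_def ..
  have N4: "N \<le> 4 * \<omega>^2" unfolding N_eq using NSne by (intro cSup_least) (auto simp: NS_def SB)
  have SN: "nrm (S x) \<le> N" if "nrm x \<le> 1" for x
    unfolding N_eq using bddN that by (intro cSup_upper) (auto simp: NS_def)
  have N0: "N \<ge> 0" using SN[of 0] nrm_nonneg[of "S 0"] by simp
  have wsq: "(cmod (ip (A x) x))^2 \<le> N / 2" if x1: "nrm x = 1" for x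
  proof -
    define w where "w = ip (A x) x"
    have c1: "ip (A x + As x) x = complex_of_real (2 * Re w)"
      unfolding w_def by (simp add: ip_add_l adjL complex_eq_iff)
    have c2: "ip (A x - As x) x = \<i> * complex_of_real (2 * Im w)"
      unfolding w_def by (simp add: ip_diff_l adjL complex_eq_iff)
    have "cmod (ip (A x + As x) x) \<le> nrm (A x + As x)" using cs[of "A x + As x" x] x1 by simp
    hence "\<bar>2 * Re w\<bar> \<le> nrm (A x + As x)" unfolding c1 by simp
    hence "(2 * Re w)^2 \<le> (nrm (A x + As x))^2" by (metis abs_ge_zero power2_abs power_mono)
    moreover have "cmod (ip (A x - As x) x) \<le> nrm (A x - As x)" using cs[of "A x - As x" x] x1 by simp
    hence "\<bar>2 * Im w\<bar> \<le> nrm (A x - As x)" unfolding c2 by (simp add: norm_mult)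
    hence "(2 * Im w)^2 \<le> (nrm (A x - As x))^2" by (metis abs_ge_zero power2_abs power_mono)
    ultimately have "4 * (cmod w)^2 \<le> (nrm (A x + As x))^2 + (nrm (A x - As x))^2"
      by (simp add: cmod_power2 power_mult_distrib)
    also have "\<dots> = 2 * Re (ip (A x) (A x)) + 2 * Re (ip (As x) (As x))"
      unfolding nrm_sq by (rule parallelogram)
    also have "\<dots> = 2 * Re (ip (S x) x)"
      unfolding S_def ip_add_l using adj[of x "A x"] adj[of "As x" x] Re_ip_sym by simp
    also have "\<dots> \<le> 2 * cmod (ip (S x) x)" using complex_Re_le_cmod by simp
    also have "\<dots> \<le> 2 * (nrm (S x) * nrm x)" using cs by simp
    also have "\<dots> \<le> 2 * N" using SN[of x] x1 by simp
    finally show ?thesis unfolding w_def by simp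
  qed
  have wN: "\<omega> \<le> sqrt (N / 2)"
    unfolding \<omega>_def using N0 wsq by (intro cSup_least) (auto simp: W_def intro: real_le_rsqrt)
  have wN2: "\<omega>^2 \<le> N / 2"
  proof -
    have "\<omega>^2 \<le> (sqrt (N / 2))^2" using power_mono[OF wN w0, of 2] .
    also have "\<dots> = N / 2" using N0 by simp
    finally show ?thesis .
  qed
  have Tform: "(cmod (ip (T x) x))^2 = (a+b)^2 * (Re (ip (A x) x))^2 + (a-b)^2 * (Im (ip (A x) x))^2" for x
  proof -
    have "ip (T x) x = complex_of_real a * ip (A x) x + complex_of_real b * cnj (ip (A x) x)"
      unfolding T_def by (simp add: ip_add_l ip_sc_l adjL)
    thus ?thesis unfolding cmod_power2 by (simp add: power2_eq_square algebra_simps)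
  qed
  have Tlow: "m * cmod (ip (A x) x) \<le> cmod (ip (T x) x)" for x
  proof -
    have "(m * cmod (ip (A x) x))^2 = m^2 * ((Re (ip (A x) x))^2 + (Im (ip (A x) x))^2)"
      by (simp add: power_mult_distrib cmod_power2)
    also have "\<dots> \<le> (a+b)^2 * (Re (ip (A x) x))^2 + (a-b)^2 * (Im (ip (A x) x))^2"
      unfolding m_def by (rule mix_bounds(1))
    also have "\<dots> = (cmod (ip (T x) x))^2" by (rule Tform[symmetric])
    finally have "(m * cmod (ip (A x) x))^2 \<le> (cmod (ip (T x) x))^2" .
    thus ?thesis by (rule power2_le_imp_le) simp
  qed
  have Tup: "cmod (ip (T x) x) \<le> M * cmod (ip (A x) x)" for x
  proof -
    have "(cmod (ip (T x) x))^2 = (a+b)^2 * (Re (ip (A x) x))^2 + (a-b)^2 * (Im (ip (A x) x))^2"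
      by (rule Tform)
    also have "\<dots> \<le> M^2 * ((Re (ip (A x) x))^2 + (Im (ip (A x) x))^2)"
      unfolding M_def by (rule mix_bounds(2))
    also have "\<dots> = (M * cmod (ip (A x) x))^2"
      by (simp add: power_mult_distrib cmod_power2)
    finally have "(cmod (ip (T x) x))^2 \<le> (M * cmod (ip (A x) x))^2" .
    thus ?thesis by (rule power2_le_imp_le) (simp add: M_def)
  qed
  define V where "V = {cmod (ip (T x) x) | x. nrm x = 1}"
  define \<Omega> where "\<Omega> = Sup (insert 0 V)"
  have M0: "M \<ge> 0" unfolding M_def by simp
  have m0: "m \<ge> 0" unfolding m_def by simp
  have TMw: "cmod (ip (T x) x) \<le> M * \<omega>" if "nrm x = 1" for x
    using Tup[of x] mult_left_mono[OF wunit[OF that] M0] by linarith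
  have bddV: "bdd_above (insert 0 V)"
  proof (rule bdd_aboveI[of _ "M * \<omega>"])
    fix r assume "r \<in> insert 0 V"
    thus "r \<le> M * \<omega>" unfolding V_def using M0 w0 TMw by auto
  qed
  have O0: "\<Omega> \<ge> 0" unfolding \<Omega>_def using bddV by (intro cSup_upper) auto
  have OM: "\<Omega> \<le> M * \<omega>" unfolding \<Omega>_def V_def using M0 w0 TMw
    by (intro cSup_least) auto
  have Om: "m * \<omega> \<le> \<Omega>"
  proof (cases "m = 0")
    case True thus ?thesis using O0 by simp
  next
    case False
    hence mp: "m > 0" using m0 by simp
    have "\<omega> \<le> \<Omega> / m" unfolding \<omega>_def
    proof (rule cSup_least)
      show "insert 0 W \<noteq> {}" by simp
      fix r assume "r \<in> insert 0 W"
      then consider "r = 0" | x where "r = cmod (ip (A x) x)" "nrm x = 1" unfolding W_def by blast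
      thus "r \<le> \<Omega> / m"
      proof cases
        case 1 thus ?thesis using O0 mp by simp
      next
        case 2
        have "cmod (ip (T x) x) \<le> \<Omega>" unfolding \<Omega>_def using bddV 2 by (intro cSup_upper) (auto simp: V_def)
        hence "m * r \<le> \<Omega>" using Tlow[of x] 2 by simp
        thus ?thesis using mp by (simp add: field_simps)
      qed
    qed
    thus ?thesis using mp by (simp add: field_simps)
  qed
  have low: "(1/4) * m^2 * N \<le> \<Omega>^2"
  proof -
    have "m^2 * N \<le> m^2 * (4 * \<omega>^2)" using N4 by (intro mult_left_mono) auto
    hence "(1/4) * m^2 * N \<le> m^2 * \<omega>^2" by simp
    also have "\<dots> = (m * \<omega>)^2" by (simp add: power_mult_distrib)
    also have "\<dots> \<le> \<Omega>^2" using Om m0 w0 by (intro power_mono) auto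
    finally show ?thesis .
  qed
  have up: "\<Omega>^2 \<le> (1/2) * M^2 * N"
  proof -
    have "\<Omega>^2 \<le> (M * \<omega>)^2" using OM O0 by (intro power_mono) auto
    also have "\<dots> = M^2 * \<omega>^2" by (simp add: power_mult_distrib)
    also have "\<dots> \<le> M^2 * (N / 2)" using wN2 by (intro mult_left_mono) auto
    finally show ?thesis by simp
  qed
  have OmegaEq: "Sup (insert 0 {cmod (ip (sc (complex_of_real a) (A x) + sc (complex_of_real b) (adjoint ip A x)) x)
              | x. cnorm ip x = 1}) = \<Omega>"
    unfolding \<Omega>_def V_def T_def As_def ..
  have NEq: "op_norm ip (\<lambda>x. adjoint ip A (A x) + A (adjoint ip A x)) = N"
    unfolding N_def S_def As_def ..
  show ?thesis unfolding OmegaEq NEq using low up unfolding m_def M_def by simp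
qed

end

theorem corollary4p2:
  fixes sc :: "complex \<Rightarrow> 'h::ab_group_add \<Rightarrow> 'h"
    and ip :: "'h \<Rightarrow> 'h \<Rightarrow> complex"
    and \<phi> \<psi> :: "real \<Rightarrow> real"
    and A :: "'h \<Rightarrow> 'h"
    and t :: real
  assumes "complex_hilbert_space sc ip"
    and "continuous_on {0..1} \<phi>" and "continuous_on {0..1} \<psi>"
    and "bounded_op sc ip A"
    and "t \<in> {0..1}"
  shows "(1/4) * (min \<bar>\<phi> t + \<psi> t\<bar> \<bar>\<phi> t - \<psi> t\<bar>)\<^sup>2
           * op_norm ip (\<lambda>x. adjoint ip A (A x) + A (adjoint ip A x))
         \<le> (omega_t sc ip \<phi> \<psi> A t)\<^sup>2
       \<and> (omega_t sc ip \<phi> \<psi> A t)\<^sup>2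
         \<le> (1/2) * (max \<bar>\<phi> t + \<psi> t\<bar> \<bar>\<phi> t - \<psi> t\<bar>)\<^sup>2
           * op_norm ip (\<lambda>x. adjoint ip A (A x) + A (adjoint ip A x))"
proof -
  interpret chs sc ip by unfold_locales (rule assms(1))
  show ?thesis unfolding omega_t_def by (rule main[OF assms(4)])
qed

end
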